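(* Define $\rho:\mathbb{C}\to\mathbb{C}$ by $\rho(re^{i\theta})=r\,r_\gamma(\theta)e^{i\theta}$ and let $\mathcal{L}=\max(\mathrm{Lip}(\rho),\mathrm{Lip}(\rho^{-1}))$. Fix $\varepsilon>0$ such that $\varepsilon':=\frac32\mathcal{L}^2\varepsilon\le\frac14$, and for $l\ge0$ let $n_l=\lceil2\pi\varepsilon^{-1}(1+(1+\varepsilon)^l)\rceil$. For $l\ge0$ and $1\le j\le n_l$ let $r_l=1+(1+\varepsilon)^{-l}$, $\theta_{j,l}=-\pi+\frac{2\pi}{n_l}j$, and $q_{j,l}=r_l\,r_\gamma(\theta_{j,l})e^{i\theta_{j,l}}$. Then $\bigcup_{l=0}^\infty\{q_{j,l}\}_{j=1}^{n_l}$ is an $\varepsilon'$-fine Whitney set for $\Omega^-_{1/\mathcal{L}}$ with respect to $\gamma$.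
   Context: Let $r_\gamma:\mathbb{R}\to(0,\infty)$ be a $2\pi$-periodic Lipschitz function, $\gamma=\{r_\gamma(\theta)e^{i\theta}:0\le\theta\le2\pi\}$, $\Omega^+$ the bounded domain enclosed by $\gamma$, $\Omega^-=\mathbb{C}\setminus\overline{\Omega^+}$, $d(z)=\mathrm{dist}(z,\gamma)$, and $\Omega^-_\delta=\{z\in\Omega^-:d(z)<\delta\}$. Whitney sets: for $A\subset\mathbb{R}^n$ closed, $\mathcal{O}\subset A^c$ and $\varepsilon\le1/2$, a countable set $\{x_j\}\subset A^c$ is an $\varepsilon$-fine Whitney set for $\mathcal{O}$ with respect to $A$ if (i) $\mathcal{O}\subset\bigcup_jB(x_j,\varepsilon\,\mathrm{dist}(x_j,A))$ (open balls), and (ii) $\sup_{x}\sum_j\chi_{B(x_j,\varepsilon\,\mathrm{dist}(x_j,A))}(x)<\infty$. *)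

theory Defs
  imports "HOL-Analysis.Analysis"
begin

definition curve :: "(real \<Rightarrow> real) \<Rightarrow> complex set" where
  "curve r = (\<lambda>\<theta>. complex_of_real (r \<theta>) * cis \<theta>) ` {0..2*pi}"

definition Omega_plus :: "(real \<Rightarrow> real) \<Rightarrow> complex set" where
  "Omega_plus r = inside (curve r)"

definition Omega_minus :: "(real \<Rightarrow> real) \<Rightarrow> complex set" where
  "Omega_minus r = - closure (Omega_plus r)"

definition Omega_minus_delta :: "(real \<Rightarrow> real) \<Rightarrow> real \<Rightarrow> complex set" where
  "Omega_minus_delta r \<delta> = {z \<in> Omega_minus r. infdist z (curve r) < \<delta>}"

text \<open>rho(r e^{i theta}) = r * r_gamma(theta) e^{i theta} (well defined by periodicity; rho 0 = 0).\<close>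
definition rho :: "(real \<Rightarrow> real) \<Rightarrow> complex \<Rightarrow> complex" where
  "rho r z = complex_of_real (cmod z * r (Arg z)) * cis (Arg z)"

definition Lip :: "('a::metric_space \<Rightarrow> 'b::metric_space) \<Rightarrow> real" where
  "Lip f = Inf {L. L-lipschitz_on UNIV f}"

definition whitney_set :: "real \<Rightarrow> 'a::euclidean_space set \<Rightarrow> 'a set \<Rightarrow> 'a set \<Rightarrow> bool" where
  "whitney_set \<epsilon> U A X \<longleftrightarrow>
     closed A \<and> U \<subseteq> - A \<and> \<epsilon> \<le> 1/2 \<and>
     countable X \<and> X \<subseteq> - A \<and>
     U \<subseteq> (\<Union>x\<in>X. ball x (\<epsilon> * infdist x A)) \<and>
     (\<exists>M::nat. \<forall>y. finite {x \<in> X. y \<in> ball x (\<epsilon> * infdist x A)} \<and>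
                    card {x \<in> X. y \<in> ball x (\<epsilon> * infdist x A)} \<le> M)"

end

theory Submission
  imports Defs
begin

lemma cos_lb: "1 - x^2/2 \<le> cos (x::real)"
proof -
  have "cos x = cos (2*(x/2))" by simp
  also have "\<dots> = 1 - 2 * sin (x/2)^2" by (rule cos_double_sin)
  finally have e: "cos x = 1 - 2 * sin (x/2)^2" .
  have "sin (x/2)^2 \<le> (x/2)^2"
    using abs_sin_x_le_abs_x[of "x/2"] by (metis abs_le_square_iff abs_ge_zero)
  then show ?thesis using e by (simp add: power_divide)
qed

lemma sin_lb3:
  fixes x :: real assumes "x \<ge> 0"
  shows "x - x^3/6 \<le> sin x"
proof -
  let ?f = "\<lambda>x. sin x - x + x^3/6"
  have "\<And>u. \<lbrakk>0 \<le> u; u \<le> x\<rbrakk> \<Longrightarrow> \<exists>y. (?f has_real_derivative y) (at u) \<and> 0 \<le> y"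
  proof -
    fix u :: real
    have "(?f has_real_derivative (cos u - 1 + u^2/2)) (at u)"
      by (auto intro!: derivative_eq_intros simp: power2_eq_square)
    moreover have "0 \<le> cos u - 1 + u^2/2" using cos_lb[of u] by simp
    ultimately show "\<exists>y. (?f has_real_derivative y) (at u) \<and> 0 \<le> y" by blast
  qed
  then have "?f 0 \<le> ?f x"
    by (rule DERIV_nonneg_imp_nondecreasing [OF assms])
  then show ?thesis by simp
qed

lemma sin_lb_half:
  fixes x :: real assumes "0 \<le> x" "x \<le> pi/2"
  shows "x/4 \<le> sin x"
proof -
  have p2: "pi/2 < 2" using pi_less_4 by simp
  have "x*x \<le> 2*2" using assms p2 by (intro mult_mono) auto
  then have "x * (x*x) \<le> x * 4" using assms(1) by (intro mult_left_mono) auto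
  then have "x/4 \<le> x - x^3/6" using assms(1) by (simp add: power3_eq_cube)
  then show ?thesis using sin_lb3[OF assms(1)] by linarith
qed

lemma norm_cis_minus_1_sq: "(cmod (cis a - 1))^2 = 4 * (sin (a/2))^2"
proof -
  have "(cmod (cis a - 1))^2 = (cos a - 1)^2 + (sin a)^2"
    by (simp only: cmod_power2) simp
  also have "\<dots> = 2 - 2 * cos a" using sin_cos_squared_add[of a]
    by (simp add: power2_diff)
  also have "cos a = 1 - 2 * sin (a/2)^2" using cos_double_sin[of "a/2"] by simp
  finally show ?thesis by simp
qed

lemma norm_cis_minus_1: "cmod (cis a - 1) = 2 * \<bar>sin (a/2)\<bar>"
proof -
  have e: "(2 * \<bar>sin (a/2)\<bar>)^2 = 4 * (sin (a/2))^2"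
    by (simp only: power_mult_distrib power2_abs) simp
  have h: "(cmod (cis a - 1))^2 = (2 * \<bar>sin (a/2)\<bar>)^2"
    unfolding e by (rule norm_cis_minus_1_sq)
  have nn: "0 \<le> 2 * \<bar>sin (a/2)\<bar>" by simp
  show ?thesis by (rule power2_eq_imp_eq[OF h norm_ge_zero nn])
qed

lemma norm_cis_minus_1_ub: "cmod (cis a - 1) \<le> \<bar>a\<bar>"
proof -
  have "\<bar>sin (a/2)\<bar> \<le> \<bar>a/2\<bar>" by (rule abs_sin_x_le_abs_x)
  moreover have "\<bar>a/2\<bar> = \<bar>a\<bar>/2" by simp
  ultimately have "2 * \<bar>sin (a/2)\<bar> \<le> \<bar>a\<bar>" by linarith
  then show ?thesis by (simp only: norm_cis_minus_1)
qed

lemma norm_cis_minus_1_lb: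
  assumes "\<bar>a\<bar> \<le> pi" shows "\<bar>a\<bar>/4 \<le> cmod (cis a - 1)"
proof -
  have "\<bar>a\<bar>/2/4 \<le> \<bar>sin (a/2)\<bar>"
  proof (cases "a \<ge> 0")
    case True
    then have "a/2/4 \<le> sin (a/2)" using assms by (intro sin_lb_half) auto
    then show ?thesis using True by linarith
  next
    case False
    then have "-a/2/4 \<le> sin (-a/2)" using assms by (intro sin_lb_half) auto
    moreover have "sin (-a/2) = - sin (a/2)" by (metis minus_divide_left sin_minus)
    ultimately show ?thesis using False by linarith
  qed
  then have "\<bar>a\<bar>/4 \<le> 2 * \<bar>sin (a/2)\<bar>" by linarith
  then show ?thesis by (simp only: norm_cis_minus_1)
qed

lemma per_nat:
  assumes per: "\<forall>\<theta>. f (\<theta> + 2*pi) = (f \<theta> :: real)"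
  shows "f (b + 2*pi*real n) = f b"
proof (induction n)
  case 0 then show ?case by simp
next
  case (Suc n)
  have e: "b + 2*pi*real (Suc n) = (b + 2*pi*real n) + 2*pi" by (simp add: algebra_simps)
  have "f ((b + 2*pi*real n) + 2*pi) = f (b + 2*pi*real n)" using per by blast
  then show ?case unfolding e using Suc by simp
qed

lemma per_int:
  assumes per: "\<forall>\<theta>. f (\<theta> + 2*pi) = (f \<theta> :: real)"
  shows "f (b + 2*pi*real_of_int k) = f b"
proof (cases "k \<ge> 0")
  case True
  then have e: "real (nat k) = real_of_int k" by simp
  show ?thesis using per_nat[OF per, of b "nat k"] unfolding e .
next
  case False
  define m where "m = nat (-k)"
  define x where "x = real m"
  have k: "real_of_int k = - x" using False unfolding x_def m_def by simp
  have e1: "f (b - 2*pi*x + 2*pi*x) = f (b - 2*pi*x)"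
    unfolding x_def by (rule per_nat[OF per])
  have e2: "b - 2*pi*x + 2*pi*x = b" by simp
  have e3: "b + 2*pi*real_of_int k = b - 2*pi*x" unfolding k by simp
  have "f (b + 2*pi*real_of_int k) = f (b - 2*pi*x)" using e3 by (rule arg_cong)
  also have "\<dots> = f (b - 2*pi*x + 2*pi*x)" using e1 by (rule sym)
  also have "\<dots> = f b" using e2 by (rule arg_cong)
  finally show ?thesis .
qed

lemma per_cis:
  assumes per: "\<forall>\<theta>. f (\<theta> + 2*pi) = (f \<theta> :: real)" and "cis a = cis b"
  shows "f a = f b"
proof -
  have "cos a = cos b" using arg_cong[OF assms(2), of Re] by simp
  moreover have "sin a = sin b" using arg_cong[OF assms(2), of Im] by simp
  ultimately have "\<exists>n::int. a = b + 2*pi*n" using sin_cos_eq_iff[of a b] by simp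
  then obtain n :: int where n: "a = b + 2*pi*n" by (elim exE)
  show ?thesis unfolding n by (rule per_int[OF per])
qed


lemma sgn_diff:
  fixes z w :: complex assumes "w \<noteq> 0"
  shows "cmod w * cmod (sgn z - sgn w) \<le> 2 * cmod (z - w)"
proof (cases "z = 0")
  case True
  then show ?thesis using assms by (simp add: norm_sgn norm_minus_commute)
next
  case False
  have sw: "of_real (cmod w) * sgn w = w" by (simp add: sgn_div_norm scaleR_conv_of_real assms)
  have sz: "of_real (cmod z) * sgn z = z" by (simp add: sgn_div_norm scaleR_conv_of_real False)
  have e: "of_real (cmod w) * (sgn z - sgn w) = of_real (cmod w / cmod z - 1) * z + (z - w)"
  proof -
    have "of_real (cmod w / cmod z - 1) * z = of_real (cmod w / cmod z) * (of_real (cmod z) * sgn z) - z"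
      using sz by (simp add: algebra_simps)
    also have "\<dots> = of_real (cmod w) * sgn z - z" using False by (simp add: mult.assoc[symmetric])
    finally show ?thesis using sw by (simp add: algebra_simps)
  qed
  have "cmod w * cmod (sgn z - sgn w) = cmod (of_real (cmod w) * (sgn z - sgn w))"
    by (simp add: norm_mult)
  also have "\<dots> \<le> cmod (of_real (cmod w / cmod z - 1) * z) + cmod (z - w)"
    unfolding e by (rule norm_triangle_ineq)
  also have "cmod (of_real (cmod w / cmod z - 1) * z) = \<bar>cmod w - cmod z\<bar>"
  proof -
    have "cmod (of_real (cmod w / cmod z - 1) * z) = \<bar>cmod w / cmod z - 1\<bar> * cmod z"
      by (simp only: norm_mult norm_of_real)
    also have "\<dots> = \<bar>(cmod w / cmod z - 1) * cmod z\<bar>" by (simp add: abs_mult)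
    also have "(cmod w / cmod z - 1) * cmod z = cmod w - cmod z" using False by (simp add: field_simps)
    finally show ?thesis .
  qed
  also have "\<bar>cmod w - cmod z\<bar> \<le> cmod (z - w)"
    by (metis norm_minus_commute norm_triangle_ineq3)
  finally show ?thesis by linarith
qed

lemma sgn_cis_eq: "sgn (cis t) = cis t"
  by (simp add: sgn_div_norm)

lemma Arg_cis_per:
  assumes per: "\<forall>\<theta>. f (\<theta> + 2*pi) = (f \<theta> :: real)"
  shows "f (Arg (cis t)) = f t"
  by (rule per_cis[OF per]) (simp add: cis_Arg sgn_cis_eq)

lemma lip_arg_mult:
  fixes \<phi> :: "real \<Rightarrow> real"
  assumes per: "\<forall>\<theta>. \<phi> (\<theta> + 2*pi) = \<phi> \<theta>"
    and lip: "K-lipschitz_on UNIV \<phi>" and bd: "\<forall>x. \<bar>\<phi> x\<bar> \<le> M"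
  shows "(M + 8*K)-lipschitz_on UNIV (\<lambda>z. of_real (\<phi> (Arg z)) * z)"
proof (rule lipschitz_onI)
  have K0: "0 \<le> K" using lip by (rule lipschitz_on_nonneg)
  have M0: "0 \<le> M" using bd by (meson abs_ge_zero order_trans)
  show "0 \<le> M + 8*K" using K0 M0 by simp
  fix z w :: complex
  show "dist (of_real (\<phi> (Arg z)) * z) (of_real (\<phi> (Arg w)) * w) \<le> (M + 8*K) * dist z w"
  proof (cases "z = 0 \<or> w = 0")
    case True
    then show ?thesis
    proof
      assume z: "z = 0"
      have "cmod (of_real (\<phi> (Arg w)) * w) \<le> M * cmod w"
        using bd by (simp add: norm_mult mult_right_mono)
      also have "\<dots> \<le> (M + 8*K) * cmod w" using K0 by (simp add: mult_right_mono)
      finally show ?thesis using z by (simp add: dist_norm)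
    next
      assume w: "w = 0"
      have "cmod (of_real (\<phi> (Arg z)) * z) \<le> M * cmod z"
        using bd by (simp add: norm_mult mult_right_mono)
      also have "\<dots> \<le> (M + 8*K) * cmod z" using K0 by (simp add: mult_right_mono)
      finally show ?thesis using w by (simp add: dist_norm)
    qed
  next
    case False
    then have z0: "z \<noteq> 0" and w0: "w \<noteq> 0" by auto
    define e where "e = sgn z * cnj (sgn w)"
    have nsw: "cmod (sgn w) = 1" using w0 by (simp add: norm_sgn)
    have nsz: "cmod (sgn z) = 1" using z0 by (simp add: norm_sgn)
    have ww: "sgn w * cnj (sgn w) = 1"
      using complex_norm_square[of "sgn w"] nsw by simp
    have ne: "cmod e = 1" unfolding e_def using nsw nsz by (simp add: norm_mult)
    then have e0: "e \<noteq> 0" by auto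
    have se: "sgn e = e" using ne by (simp add: sgn_div_norm)
    define b where "b = Arg w + Arg e"
    have "cis b = cis (Arg w) * cis (Arg e)" unfolding b_def by (simp add: cis_mult)
    also have "\<dots> = sgn w * e" using w0 e0 se by (simp add: cis_Arg)
    also have "\<dots> = sgn z" unfolding e_def using ww by (simp add: algebra_simps)
    also have "\<dots> = cis (Arg z)" using z0 by (simp add: cis_Arg)
    finally have "\<phi> b = \<phi> (Arg z)" by (rule per_cis[OF per])
    then have "\<bar>\<phi> (Arg z) - \<phi> (Arg w)\<bar> = \<bar>\<phi> b - \<phi> (Arg w)\<bar>" by simp
    also have "\<dots> \<le> K * \<bar>b - Arg w\<bar>" using lipschitz_onD[OF lip, of b "Arg w"] by (simp add: dist_real_def)
    also have "\<bar>b - Arg w\<bar> = \<bar>Arg e\<bar>" unfolding b_def by simp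
    also have "\<bar>Arg e\<bar> \<le> 4 * cmod (cis (Arg e) - 1)"
      using norm_cis_minus_1_lb[of "Arg e"] Arg_bounded[of e] by linarith
    also have "cis (Arg e) - 1 = e - 1" using e0 se by (simp add: cis_Arg)
    also have "cmod (e - 1) = cmod (sgn z - sgn w)"
    proof -
      have "e - 1 = (sgn z - sgn w) * cnj (sgn w)" unfolding e_def using ww by (simp add: algebra_simps)
      then show ?thesis using nsw by (simp add: norm_mult)
    qed
    finally have dphi: "\<bar>\<phi> (Arg z) - \<phi> (Arg w)\<bar> \<le> K * (4 * cmod (sgn z - sgn w))"
      using K0 by (simp add: mult_left_mono)
    have "of_real (\<phi> (Arg z)) * z - of_real (\<phi> (Arg w)) * w
        = of_real (\<phi> (Arg z)) * (z - w) + of_real (\<phi> (Arg z) - \<phi> (Arg w)) * w"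
      by (simp add: algebra_simps)
    then have "dist (of_real (\<phi> (Arg z)) * z) (of_real (\<phi> (Arg w)) * w)
        \<le> cmod (of_real (\<phi> (Arg z)) * (z - w)) + cmod (of_real (\<phi> (Arg z) - \<phi> (Arg w)) * w)"
      by (simp add: dist_norm norm_triangle_ineq)
    also have "cmod (of_real (\<phi> (Arg z)) * (z - w)) \<le> M * cmod (z - w)"
      using bd by (simp add: norm_mult mult_right_mono)
    also have "cmod (of_real (\<phi> (Arg z) - \<phi> (Arg w)) * w) = \<bar>\<phi> (Arg z) - \<phi> (Arg w)\<bar> * cmod w"
      by (simp only: norm_mult norm_of_real)
    also have "\<dots> \<le> K * (4 * cmod (sgn z - sgn w)) * cmod w"
      using dphi by (simp add: mult_right_mono)
    also have "\<dots> = 4 * K * (cmod w * cmod (sgn z - sgn w))" by (simp add: algebra_simps)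
    also have "\<dots> \<le> 4 * K * (2 * cmod (z - w))"
      using sgn_diff[OF w0, of z] K0 by (intro mult_left_mono) auto
    finally show ?thesis by (simp add: dist_norm algebra_simps)
  qed
qed

lemma Lip_works:
  assumes "C-lipschitz_on UNIV g"
  shows "(Lip g)-lipschitz_on UNIV g"
proof -
  let ?S = "{L. L-lipschitz_on UNIV g}"
  have ne: "?S \<noteq> {}" using assms by auto
  have nn: "\<And>L. L \<in> ?S \<Longrightarrow> 0 \<le> L" by (auto intro: lipschitz_on_nonneg)
  have L0: "0 \<le> Lip g" unfolding Lip_def by (rule cInf_greatest[OF ne nn])
  show ?thesis
  proof (rule lipschitz_onI[OF _ L0])
    fix x y :: 'a
    show "dist (g x) (g y) \<le> Lip g * dist x y"
    proof (cases "x = y")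
      case True then show ?thesis by simp
    next
      case False
      then have d0: "0 < dist x y" by simp
      have "dist (g x) (g y) / dist x y \<le> Lip g"
        unfolding Lip_def
      proof (rule cInf_greatest[OF ne])
        fix L assume "L \<in> ?S"
        then have "dist (g x) (g y) \<le> L * dist x y" by (auto intro: lipschitz_onD)
        then show "dist (g x) (g y) / dist x y \<le> L" using d0 by (simp add: divide_le_eq)
      qed
      then show ?thesis using d0 by (simp add: divide_le_eq)
    qed
  qed
qed


definition sig :: "(real \<Rightarrow> real) \<Rightarrow> complex \<Rightarrow> complex" where
  "sig f w = of_real (1 / f (Arg w)) * w"

lemma rho_eq: "rho f z = of_real (f (Arg z)) * z"
proof (cases "z = 0")
  case True then show ?thesis by (simp add: rho_def)
next
  case False
  have "of_real (cmod z) * cis (Arg z) = z"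
    using False by (simp add: cis_Arg sgn_div_norm scaleR_conv_of_real)
  then show ?thesis unfolding rho_def by (metis mult.commute mult.left_commute of_real_mult)
qed

lemma sig_rho:
  assumes pos: "\<forall>\<theta>. f \<theta> > 0"
  shows "sig f (rho f z) = z"
proof -
  have fp: "0 < f (Arg z)" using pos by blast
  have "Arg (rho f z) = Arg z" unfolding rho_eq using fp by simp
  then show ?thesis unfolding sig_def rho_eq using fp
    by (simp add: mult.assoc[symmetric] of_real_mult[symmetric] del: of_real_mult)
qed

lemma rho_sig:
  assumes pos: "\<forall>\<theta>. f \<theta> > 0"
  shows "rho f (sig f w) = w"
proof -
  have fp: "0 < f (Arg w)" using pos by blast
  then have fp': "0 < 1 / f (Arg w)" by simp
  have "Arg (sig f w) = Arg w" unfolding sig_def using fp' by (rule Arg_times_of_real)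
  then show ?thesis unfolding sig_def rho_eq using fp
    by (simp add: mult.assoc[symmetric] of_real_mult[symmetric] del: of_real_mult)
qed

lemma inv_rho:
  assumes pos: "\<forall>\<theta>. f \<theta> > 0"
  shows "inv (rho f) = sig f"
proof
  fix w
  have inj: "inj (rho f)" by (metis injI sig_rho[OF pos])
  show "inv (rho f) w = sig f w" by (rule inv_f_eq[OF inj rho_sig[OF pos]])
qed

lemma norm_sig:
  assumes pos: "\<forall>\<theta>. f \<theta> > 0"
  shows "cmod (sig f w) = cmod w / f (Arg w)"
proof -
  have fp: "0 < f (Arg w)" using pos by blast
  have "cmod (sig f w) = \<bar>1 / f (Arg w)\<bar> * cmod w"
    unfolding sig_def by (simp only: norm_mult norm_of_real)
  then show ?thesis using fp by simp
qed

lemma rho_polar: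
  assumes per: "\<forall>\<theta>. f (\<theta> + 2*pi) = f \<theta>" and r: "0 < r"
  shows "rho f (of_real r * cis t) = of_real (r * f t) * cis t"
proof -
  have "Arg (of_real r * cis t) = Arg (cis t)" using r by simp
  then have "f (Arg (of_real r * cis t)) = f t" using Arg_cis_per[OF per] by simp
  then show ?thesis unfolding rho_eq by (simp add: algebra_simps)
qed

lemma sig_polar:
  assumes per: "\<forall>\<theta>. f (\<theta> + 2*pi) = f \<theta>" and pos: "\<forall>\<theta>. f \<theta> > 0" and r: "0 < r"
  shows "sig f (of_real (r * f t) * cis t) = of_real r * cis t"
  using sig_rho[OF pos, of "of_real r * cis t"] rho_polar[OF per r, of t] by simp

lemma f_bounds:
  fixes f :: "real \<Rightarrow> real"
  assumes per: "\<forall>\<theta>. f (\<theta> + 2*pi) = f \<theta>" and pos: "\<forall>\<theta>. f \<theta> > 0"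
    and lip: "K-lipschitz_on UNIV f"
  obtains m M where "0 < m" "\<And>x. m \<le> f x" "\<And>x. f x \<le> M"
proof -
  have cont: "continuous_on {-pi..pi} f"
    using lipschitz_on_continuous_on[OF lip] continuous_on_subset by blast
  obtain a where a: "a \<in> {-pi..pi}" "\<And>y. y \<in> {-pi..pi} \<Longrightarrow> f a \<le> f y"
    using continuous_attains_inf[of "{-pi..pi}" f] cont pi_gt_zero by auto
  obtain b where b: "b \<in> {-pi..pi}" "\<And>y. y \<in> {-pi..pi} \<Longrightarrow> f y \<le> f b"
    using continuous_attains_sup[of "{-pi..pi}" f] cont pi_gt_zero by auto
  have red: "f x = f (Arg (cis x)) \<and> Arg (cis x) \<in> {-pi..pi}" for x
    using Arg_cis_per[OF per, of x] Arg_bounded[of "cis x"] by auto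
  show ?thesis
  proof (rule that[of "f a" "f b"])
    show "0 < f a" using pos by blast
    show "f a \<le> f x" for x using red[of x] a(2) by metis
    show "f x \<le> f b" for x using red[of x] b(2) by metis
  qed
qed

lemma rho_lip:
  assumes per: "\<forall>\<theta>. f (\<theta> + 2*pi) = f \<theta>" and pos: "\<forall>\<theta>. f \<theta> > 0"
    and lip: "K-lipschitz_on UNIV f"
  shows "\<exists>C. C-lipschitz_on UNIV (rho f)"
proof -
  obtain m M where mM: "0 < m" "\<And>x. m \<le> f x" "\<And>x. f x \<le> M"
    using f_bounds[OF per pos lip] by blast
  have bd: "\<forall>x. \<bar>f x\<bar> \<le> M" using mM pos by (metis abs_of_pos)
  have e: "rho f = (\<lambda>z. of_real (f (Arg z)) * z)" by (rule ext) (rule rho_eq)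
  show ?thesis unfolding e using lip_arg_mult[OF per lip bd] by blast
qed

lemma sig_lip:
  assumes per: "\<forall>\<theta>. f (\<theta> + 2*pi) = f \<theta>" and pos: "\<forall>\<theta>. f \<theta> > 0"
    and lip: "K-lipschitz_on UNIV f"
  shows "\<exists>C. C-lipschitz_on UNIV (sig f)"
proof -
  obtain m M where mM: "0 < m" "\<And>x. m \<le> f x" "\<And>x. f x \<le> M"
    using f_bounds[OF per pos lip] by blast
  have K0: "0 \<le> K" using lip by (rule lipschitz_on_nonneg)
  have per': "\<forall>\<theta>. 1 / f (\<theta> + 2*pi) = 1 / f \<theta>" using per by simp
  have bd: "\<forall>x. \<bar>1 / f x\<bar> \<le> 1 / m"
  proof
    fix x
    have "0 < f x" using pos by blast
    then show "\<bar>1 / f x\<bar> \<le> 1 / m" using mM(1) mM(2)[of x] by (simp add: frac_le)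
  qed
  have lip': "(K / (m*m))-lipschitz_on UNIV (\<lambda>x. 1 / f x)"
  proof (rule lipschitz_onI)
    show "0 \<le> K / (m*m)" using K0 mM(1) by simp
    fix x y
    have fx: "0 < f x" and fy: "0 < f y" using pos by auto
    have "dist (1 / f x) (1 / f y) = \<bar>f y - f x\<bar> / (f x * f y)"
      using fx fy by (simp add: dist_real_def field_simps abs_div)
    also have "\<bar>f y - f x\<bar> \<le> K * dist x y"
      using lipschitz_onD[OF lip, of y x] by (simp add: dist_real_def abs_minus_commute)
    then have "\<bar>f y - f x\<bar> / (f x * f y) \<le> K * dist x y / (f x * f y)"
      using fx fy by (simp add: divide_right_mono)
    also have "\<dots> \<le> K * dist x y / (m * m)"
      using fx fy mM(1) mM(2)[of x] mM(2)[of y] K0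
      by (intro divide_left_mono mult_mono) auto
    finally show "dist (1 / f x) (1 / f y) \<le> K / (m*m) * dist x y" by simp
  qed
  have e: "sig f = (\<lambda>z. of_real (1 / f (Arg z)) * z)" by (rule ext) (simp add: sig_def)
  show ?thesis unfolding e using lip_arg_mult[OF per' lip' bd] by blast
qed


lemma curve_eq:
  assumes per: "\<forall>\<theta>. f (\<theta> + 2*pi) = f \<theta>" and pos: "\<forall>\<theta>. f \<theta> > 0"
  shows "curve f = {z. cmod (sig f z) = 1}"
proof
  show "curve f \<subseteq> {z. cmod (sig f z) = 1}"
  proof
    fix z assume "z \<in> curve f"
    then obtain t where z: "z = of_real (f t) * cis t" unfolding curve_def by auto
    have "sig f z = of_real 1 * cis t" unfolding z using sig_polar[OF per pos, of 1 t] by simp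
    then show "z \<in> {z. cmod (sig f z) = 1}" by simp
  qed
next
  show "{z. cmod (sig f z) = 1} \<subseteq> curve f"
  proof
    fix z assume "z \<in> {z. cmod (sig f z) = 1}"
    then have n1: "cmod (sig f z) = 1" by simp
    define u where "u = sig f z"
    have u0: "u \<noteq> 0" using n1 unfolding u_def by auto
    have uc: "cis (Arg u) = u" using u0 n1 unfolding u_def by (simp add: cis_Arg sgn_div_norm)
    have zu: "z = of_real (f (Arg u)) * u" unfolding u_def using rho_sig[OF pos, of z] rho_eq[of f "sig f z"] by simp
    define t where "t = (if Arg u \<ge> 0 then Arg u else Arg u + 2*pi)"
    have ct: "cis t = cis (Arg u)" unfolding t_def by (simp add: cis_mult[symmetric])
    have ft: "f t = f (Arg u)" unfolding t_def using per by simp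
    have tr: "t \<in> {0..2*pi}" unfolding t_def using Arg_bounded[of u] by auto
    have "z = of_real (f t) * cis t" unfolding zu ft ct uc ..
    then show "z \<in> curve f" unfolding curve_def using tr by blast
  qed
qed

lemma curve_nonempty: "of_real (f 0) * cis 0 \<in> curve f"
  unfolding curve_def by (rule image_eqI[of _ _ 0]) auto

lemma infdist_lb:
  assumes per: "\<forall>\<theta>. f (\<theta> + 2*pi) = f \<theta>" and pos: "\<forall>\<theta>. f \<theta> > 0"
    and hs: "\<forall>a b. dist (sig f a) (sig f b) \<le> L * dist a b" and L: "0 < L"
  shows "\<bar>cmod (sig f z) - 1\<bar> / L \<le> infdist z (curve f)"
proof -
  have ne: "curve f \<noteq> {}" using curve_nonempty by blast
  have "\<bar>cmod (sig f z) - 1\<bar> / L \<le> (INF c\<in>curve f. dist z c)"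
  proof (rule cINF_greatest[OF ne])
    fix c assume c: "c \<in> curve f"
    then have "cmod (sig f c) = 1" using curve_eq[OF per pos] by blast
    then have "\<bar>cmod (sig f z) - 1\<bar> \<le> cmod (sig f z - sig f c)"
      by (metis norm_triangle_ineq3)
    also have "\<dots> \<le> L * dist z c" using hs by (simp add: dist_norm)
    finally show "\<bar>cmod (sig f z) - 1\<bar> / L \<le> dist z c" using L by (simp add: divide_le_eq mult.commute)
  qed
  then show ?thesis using infdist_notempty[OF ne] by simp
qed

lemma norm_minus_sgn:
  assumes False: "u \<noteq> 0" shows "cmod (u - sgn u) = \<bar>cmod u - 1\<bar>"
proof -
  have sz: "of_real (cmod u) * sgn u = u" by (simp add: sgn_div_norm scaleR_conv_of_real False)
  have "of_real (cmod u - 1) * sgn u = of_real (cmod u) * sgn u - sgn u" by (simp add: algebra_simps)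
  then have "u - sgn u = of_real (cmod u - 1) * sgn u" using sz by simp
  then have "cmod (u - sgn u) = \<bar>cmod u - 1\<bar> * cmod (sgn u)" by (simp only: norm_mult norm_of_real)
  then show ?thesis using False by (simp add: norm_sgn)
qed

lemma infdist_ub:
  assumes per: "\<forall>\<theta>. f (\<theta> + 2*pi) = f \<theta>" and pos: "\<forall>\<theta>. f \<theta> > 0"
    and hr: "\<forall>a b. dist (rho f a) (rho f b) \<le> L * dist a b" and u0: "sig f z \<noteq> 0"
  shows "infdist z (curve f) \<le> L * \<bar>cmod (sig f z) - 1\<bar>"
proof -
  define c where "c = rho f (sgn (sig f z))"
  have "cmod (sig f c) = 1" unfolding c_def sig_rho[OF pos] using u0 by (simp add: norm_sgn)
  then have c: "c \<in> curve f" using curve_eq[OF per pos] by blast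
  have "infdist z (curve f) \<le> dist z c" by (rule infdist_le[OF c])
  also have "dist z c = dist (rho f (sig f z)) (rho f (sgn (sig f z)))"
    unfolding c_def rho_sig[OF pos] ..
  also have "\<dots> \<le> L * dist (sig f z) (sgn (sig f z))" using hr by blast
  also have "dist (sig f z) (sgn (sig f z)) = \<bar>cmod (sig f z) - 1\<bar>"
    by (simp add: dist_norm norm_minus_sgn[OF u0])
  finally show ?thesis .
qed

lemma Omega_minus_sub:
  assumes per: "\<forall>\<theta>. f (\<theta> + 2*pi) = f \<theta>" and pos: "\<forall>\<theta>. f \<theta> > 0"
    and lip: "K-lipschitz_on UNIV f"
  shows "Omega_minus f \<subseteq> {z. 1 < cmod (sig f z)}"
proof -
  obtain m M where mM: "0 < m" "\<And>x. m \<le> f x" "\<And>x. f x \<le> M"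
    using f_bounds[OF per pos lip] by blast
  have cs: "continuous_on UNIV (sig f)"
    using sig_lip[OF per pos lip] lipschitz_on_continuous_on by blast
  have cr: "continuous_on UNIV (rho f)"
    using rho_lip[OF per pos lip] lipschitz_on_continuous_on by blast
  have cn: "continuous_on UNIV (\<lambda>z. cmod (sig f z))" by (rule continuous_on_norm[OF cs])
  define D where "D = {z. cmod (sig f z) < 1}"
  define E where "E = {z. 1 < cmod (sig f z)}"
  have oD: "open D" unfolding D_def by (rule open_Collect_less[OF cn continuous_on_const])
  have oE: "open E" unfolding E_def by (rule open_Collect_less[OF continuous_on_const cn])
  have cu: "curve f = {z. cmod (sig f z) = 1}" by (rule curve_eq[OF per pos])
  have bD: "bounded D"
  proof -
    have "D \<subseteq> cball 0 M"
    proof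
      fix z assume "z \<in> D"
      then have "cmod (sig f z) < 1" unfolding D_def by simp
      moreover have "cmod z = f (Arg (sig f z)) * cmod (sig f z)"
        using rho_eq[of f "sig f z"] rho_sig[OF pos, of z] by (metis norm_mult norm_of_real abs_of_pos pos)
      moreover have "0 < f (Arg (sig f z))" "f (Arg (sig f z)) \<le> M" using pos mM(3) by auto
      ultimately have "cmod z \<le> f (Arg (sig f z)) * 1"
        by (metis less_eq_real_def mult_left_mono)
      then have "cmod z \<le> M" using \<open>f (Arg (sig f z)) \<le> M\<close> by linarith
      then show "z \<in> cball 0 M" by simp
    qed
    then show ?thesis using bounded_cball bounded_subset by blast
  qed
  have DI: "D \<subseteq> inside (curve f)"
  proof
    fix x assume xD: "x \<in> D"
    have xc: "x \<notin> curve f" using xD unfolding D_def cu by simp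
    define C where "C = connected_component_set (- curve f) x"
    have cC: "connected C" unfolding C_def by simp
    have xC: "x \<in> C" unfolding C_def using xc by simp
    have C1: "C \<subseteq> - curve f" unfolding C_def by (rule connected_component_subset)
    have "C \<subseteq> D \<union> E" using C1 unfolding cu D_def E_def by auto
    moreover have "D \<inter> E \<inter> C = {}" unfolding D_def E_def by auto
    ultimately have "D \<inter> C = {} \<or> E \<inter> C = {}" using connectedD[OF cC oD oE] by blast
    then have "E \<inter> C = {}" using xC xD by blast
    then have "C \<subseteq> D" using \<open>C \<subseteq> D \<union> E\<close> by blast
    then have "bounded C" using bD bounded_subset by blast
    then show "x \<in> inside (curve f)" unfolding inside_def C_def using xc by simp
  qed
  have sub: "{z. cmod (sig f z) \<le> 1} \<subseteq> closure D"
  proof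
    fix z assume "z \<in> {z. cmod (sig f z) \<le> 1}"
    then have "sig f z \<in> closure (ball 0 1)" by simp
    moreover have "rho f ` closure (ball 0 1) \<subseteq> closure D"
    proof (rule image_closure_subset)
      show "continuous_on (closure (ball 0 1)) (rho f)" using cr continuous_on_subset by blast
      show "closed (closure D)" by simp
      show "rho f ` ball 0 1 \<subseteq> closure D"
      proof
        fix y assume "y \<in> rho f ` ball 0 1"
        then obtain w where "w \<in> ball 0 1" "y = rho f w" by auto
        then have "y \<in> D" unfolding D_def using sig_rho[OF pos, of w] by simp
        then show "y \<in> closure D" using closure_subset by blast
      qed
    qed
    ultimately show "z \<in> closure D" using rho_sig[OF pos, of z] by (metis image_subset_iff)
  qed
  show ?thesis
  proof
    fix z assume "z \<in> Omega_minus f"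
    then have "z \<notin> closure (inside (curve f))" unfolding Omega_minus_def Omega_plus_def by simp
    moreover have "closure D \<subseteq> closure (inside (curve f))" using DI closure_mono by blast
    ultimately have "z \<notin> {z. cmod (sig f z) \<le> 1}" using sub by blast
    then show "z \<in> {z. 1 < cmod (sig f z)}" by simp
  qed
qed


definition tt :: "real \<Rightarrow> nat \<Rightarrow> real" where
  "tt \<epsilon> l = inverse ((1+\<epsilon>)^l)"

definition NN :: "real \<Rightarrow> nat \<Rightarrow> nat" where
  "NN \<epsilon> l = nat \<lceil>2*pi / \<epsilon> * (1 + (1+\<epsilon>)^l)\<rceil>"

definition TH :: "real \<Rightarrow> nat \<Rightarrow> nat \<Rightarrow> real" where
  "TH \<epsilon> j l = - pi + 2*pi / real (NN \<epsilon> l) * real j"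

definition QQ :: "(real \<Rightarrow> real) \<Rightarrow> real \<Rightarrow> nat \<Rightarrow> nat \<Rightarrow> complex" where
  "QQ f \<epsilon> j l = complex_of_real ((1 + tt \<epsilon> l) * f (TH \<epsilon> j l)) * cis (TH \<epsilon> j l)"

lemma tt_pos: "0 < \<epsilon> \<Longrightarrow> 0 < tt \<epsilon> l"
  unfolding tt_def by simp

lemma tt_le1: "0 < \<epsilon> \<Longrightarrow> tt \<epsilon> l \<le> 1"
  unfolding tt_def using one_le_power[of "1+\<epsilon>" l] by (simp add: inverse_le_1_iff)

lemma tt_Suc: "0 < \<epsilon> \<Longrightarrow> tt \<epsilon> (Suc l) = tt \<epsilon> l / (1+\<epsilon>)"
  unfolding tt_def by (simp add: field_simps)

lemma tt_inv: "0 < \<epsilon> \<Longrightarrow> (1+\<epsilon>)^l = 1 / tt \<epsilon> l"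
  unfolding tt_def by (simp add: field_simps)

lemma NN_bound:
  assumes "0 < \<epsilon>"
  shows "2*pi / \<epsilon> * (1 + 1 / tt \<epsilon> l) \<le> real (NN \<epsilon> l)" and "1 \<le> NN \<epsilon> l"
proof -
  have p: "0 < 2*pi / \<epsilon> * (1 + (1+\<epsilon>)^l)" using assms by (simp add: add_pos_pos)
  have "2*pi / \<epsilon> * (1 + (1+\<epsilon>)^l) \<le> real (NN \<epsilon> l)"
    unfolding NN_def using p by linarith
  then show "2*pi / \<epsilon> * (1 + 1 / tt \<epsilon> l) \<le> real (NN \<epsilon> l)" using tt_inv[OF assms, of l] by simp
  then show "1 \<le> NN \<epsilon> l" unfolding NN_def using p by linarith
qed

lemma chord_bound:
  assumes "0 \<le> s" "s \<le> r"
  shows "(cmod (of_real r * cis \<theta> - of_real s * cis \<phi>))^2 \<le> (r - s)^2 + (r * (\<theta> - \<phi>))^2"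
proof -
  have "(cmod (of_real r * cis \<theta> - of_real s * cis \<phi>))^2
      = (r * cos \<theta> - s * cos \<phi>)^2 + (r * sin \<theta> - s * sin \<phi>)^2"
    by (simp only: cmod_power2) (simp add: cis.sel)
  also have "\<dots> = r^2 + s^2 - 2 * r * s * cos (\<theta> - \<phi>)"
  proof -
    have c1: "(sin \<theta>)^2 + (cos \<theta>)^2 = 1" by (rule sin_cos_squared_add)
    have c2: "(sin \<phi>)^2 + (cos \<phi>)^2 = 1" by (rule sin_cos_squared_add)
    have c3: "cos (\<theta> - \<phi>) = cos \<theta> * cos \<phi> + sin \<theta> * sin \<phi>" by (rule cos_diff)
    show ?thesis unfolding c3 using c1 c2 by algebra
  qed
  also have "\<dots> \<le> r^2 + s^2 - 2 * r * s * (1 - (\<theta> - \<phi>)^2/2)"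
  proof -
    have h: "0 \<le> 2 * r * s" using assms by simp
    have "2 * r * s * (1 - (\<theta> - \<phi>)^2/2) \<le> 2 * r * s * cos (\<theta> - \<phi>)"
      by (rule mult_left_mono[OF cos_lb h])
    then show ?thesis by linarith
  qed
  also have "\<dots> = (r - s)^2 + (r * s) * (\<theta> - \<phi>)^2" by (simp add: power2_eq_square field_simps)
  also have "\<dots> \<le> (r - s)^2 + (r * r) * (\<theta> - \<phi>)^2"
    using assms by (intro add_left_mono mult_right_mono mult_left_mono) auto
  also have "\<dots> = (r - s)^2 + (r * (\<theta> - \<phi>))^2" by (simp add: power2_eq_square algebra_simps)
  finally show ?thesis .
qed

lemma choose_level:
  assumes e: "0 < \<epsilon>" and u: "0 < u" "u < 1"
  shows "\<exists>l. tt \<epsilon> (Suc l) < u \<and> u \<le> tt \<epsilon> l"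
proof -
  obtain N where N: "1/u < (1+\<epsilon>)^N" using real_arch_pow[of "1+\<epsilon>" "1/u"] e by auto
  have PN: "tt \<epsilon> N < u"
  proof -
    have "0 < (1+\<epsilon>)^N" using e by simp
    then show ?thesis unfolding tt_def using N u by (simp add: field_simps)
  qed
  have P0: "\<not> tt \<epsilon> 0 < u" using u unfolding tt_def by simp
  obtain k where "k < N" "\<forall>i\<le>k. \<not> tt \<epsilon> i < u" "tt \<epsilon> (Suc k) < u"
    using ex_least_nat_less[of "\<lambda>i. tt \<epsilon> i < u", OF PN P0] by blast
  then show ?thesis by (metis not_less order_refl)
qed

lemma choose_angle:
  assumes n: "1 \<le> n" and phi: "-pi < \<phi>" "\<phi> \<le> pi"
  shows "\<exists>j::nat. 1 \<le> j \<and> j \<le> n \<and> 0 \<le> (-pi + 2*pi / real n * real j) - \<phi>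
           \<and> (-pi + 2*pi / real n * real j) - \<phi> < 2*pi / real n"
proof -
  define x where "x = (\<phi> + pi) * real n / (2*pi)"
  have n0: "0 < real n" using n by simp
  have x0: "0 < x" unfolding x_def using phi n0 by (simp add: pi_gt_zero)
  have xn: "x \<le> real n" unfolding x_def using phi n0 pi_gt_zero by (simp add: field_simps)
  define j where "j = nat \<lceil>x\<rceil>"
  have jx: "real j = real_of_int \<lceil>x\<rceil>" unfolding j_def using x0 by simp
  have j1: "x \<le> real j" "real j < x + 1" unfolding jx by linarith+
  have A: "1 \<le> j" unfolding j_def using x0 by linarith
  have B: "j \<le> n"
  proof -
    have "\<lceil>x\<rceil> \<le> int n" using xn by (simp add: ceiling_le_iff)
    then show ?thesis unfolding j_def by (simp only: nat_le_iff)
  qed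
  have e: "2*pi / real n * x = \<phi> + pi" unfolding x_def using n0 by (simp add: field_simps)
  have c: "0 < 2*pi / real n" using n0 by simp
  have "2*pi / real n * x \<le> 2*pi / real n * real j" using j1(1) c by (intro mult_left_mono) auto
  then have C: "0 \<le> (-pi + 2*pi / real n * real j) - \<phi>" using e by linarith
  have "2*pi / real n * real j < 2*pi / real n * (x + 1)" using j1(2) c by (intro mult_strict_left_mono) auto
  moreover have e2: "2*pi / real n * (x + 1) = (\<phi> + pi) + 2*pi / real n"
    unfolding distrib_left e by simp
  ultimately have D: "(-pi + 2*pi / real n * real j) - \<phi> < 2*pi / real n" by linarith
  show ?thesis using A B C D by blast
qed


lemma QQ_rho:
  assumes per: "\<forall>\<theta>. f (\<theta> + 2*pi) = f \<theta>" and e: "0 < \<epsilon>"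
  shows "QQ f \<epsilon> j l = rho f (of_real (1 + tt \<epsilon> l) * cis (TH \<epsilon> j l))"
  using rho_polar[OF per, of "1 + tt \<epsilon> l" "TH \<epsilon> j l"] tt_pos[OF e, of l] unfolding QQ_def by simp

lemma QQ_sig:
  assumes per: "\<forall>\<theta>. f (\<theta> + 2*pi) = f \<theta>" and pos: "\<forall>\<theta>. f \<theta> > 0" and e: "0 < \<epsilon>"
  shows "sig f (QQ f \<epsilon> j l) = of_real (1 + tt \<epsilon> l) * cis (TH \<epsilon> j l)"
  unfolding QQ_rho[OF per e] sig_rho[OF pos] ..

lemma QQ_norm_sig:
  assumes per: "\<forall>\<theta>. f (\<theta> + 2*pi) = f \<theta>" and pos: "\<forall>\<theta>. f \<theta> > 0" and e: "0 < \<epsilon>"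
  shows "cmod (sig f (QQ f \<epsilon> j l)) = 1 + tt \<epsilon> l"
proof -
  have "cmod (of_real (1 + tt \<epsilon> l) * cis (TH \<epsilon> j l)) = \<bar>1 + tt \<epsilon> l\<bar> * cmod (cis (TH \<epsilon> j l))"
    by (simp only: norm_mult norm_of_real)
  then show ?thesis unfolding QQ_sig[OF per pos e] using tt_pos[OF e, of l] by simp
qed

lemma QQ_dist_lb:
  assumes per: "\<forall>\<theta>. f (\<theta> + 2*pi) = f \<theta>" and pos: "\<forall>\<theta>. f \<theta> > 0" and e: "0 < \<epsilon>"
    and hs: "\<forall>a b. dist (sig f a) (sig f b) \<le> L * dist a b" and L: "0 < L"
  shows "tt \<epsilon> l / L \<le> infdist (QQ f \<epsilon> j l) (curve f)"
  using infdist_lb[OF per pos hs L, of "QQ f \<epsilon> j l"] QQ_norm_sig[OF per pos e, of j l] tt_pos[OF e, of l]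
  by simp

lemma QQ_dist_ub:
  assumes per: "\<forall>\<theta>. f (\<theta> + 2*pi) = f \<theta>" and pos: "\<forall>\<theta>. f \<theta> > 0" and e: "0 < \<epsilon>"
    and hr: "\<forall>a b. dist (rho f a) (rho f b) \<le> L * dist a b"
  shows "infdist (QQ f \<epsilon> j l) (curve f) \<le> L * tt \<epsilon> l"
proof -
  have "sig f (QQ f \<epsilon> j l) \<noteq> 0" using QQ_norm_sig[OF per pos e, of j l] tt_pos[OF e, of l] by auto
  from infdist_ub[OF per pos hr this] show ?thesis
    using QQ_norm_sig[OF per pos e, of j l] tt_pos[OF e, of l] by simp
qed

lemma cover:
  assumes per: "\<forall>\<theta>. f (\<theta> + 2*pi) = f \<theta>" and pos: "\<forall>\<theta>. f \<theta> > 0"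
    and hr: "\<forall>a b. dist (rho f a) (rho f b) \<le> L * dist a b"
    and hs: "\<forall>a b. dist (sig f a) (sig f b) \<le> L * dist a b" and L: "0 < L" and e: "0 < \<epsilon>"
    and z1: "1 < cmod (sig f z)" and z2: "infdist z (curve f) < 1 / L"
  shows "\<exists>l j. 1 \<le> j \<and> j \<le> NN \<epsilon> l \<and>
            dist (QQ f \<epsilon> j l) z < (3/2 * L^2 * \<epsilon>) * infdist (QQ f \<epsilon> j l) (curve f)"
proof -
  define w where "w = sig f z"
  define s where "s = cmod w"
  have s1: "1 < s" using z1 unfolding s_def w_def .
  have "\<bar>s - 1\<bar> / L \<le> infdist z (curve f)" unfolding s_def w_def by (rule infdist_lb[OF per pos hs L])
  then have "(s - 1) / L < 1 / L" using z2 s1 by simp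
  then have s2: "s - 1 < 1" using L by (simp add: divide_strict_right_mono_neg divide_less_cancel)
  obtain l where l1: "tt \<epsilon> (Suc l) < s - 1" and l2: "s - 1 \<le> tt \<epsilon> l"
    using choose_level[OF e, of "s - 1"] s1 s2 by auto
  define n where "n = NN \<epsilon> l"
  define T where "T = tt \<epsilon> l"
  define r where "r = 1 + T"
  have T0: "0 < T" unfolding T_def by (rule tt_pos[OF e])
  have n1: "1 \<le> n" unfolding n_def by (rule NN_bound(2)[OF e])
  have nb: "2*pi / \<epsilon> * (1 + 1 / T) \<le> real n" unfolding n_def T_def by (rule NN_bound(1)[OF e])
  define \<phi> where "\<phi> = Arg w"
  obtain j where j1: "1 \<le> j" and j2: "j \<le> n"
    and a1: "0 \<le> (-pi + 2*pi / real n * real j) - \<phi>"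
    and a2: "(-pi + 2*pi / real n * real j) - \<phi> < 2*pi / real n"
    using choose_angle[OF n1, of \<phi>] Arg_bounded[of w] unfolding \<phi>_def by auto
  define \<theta> where "\<theta> = TH \<epsilon> j l"
  have th: "\<theta> = -pi + 2*pi / real n * real j" unfolding \<theta>_def TH_def n_def ..
  define p where "p = of_real r * cis \<theta>"
  have Qp: "QQ f \<epsilon> j l = rho f p" unfolding p_def r_def T_def \<theta>_def by (rule QQ_rho[OF per e])
  have w0: "w \<noteq> 0" using s1 unfolding s_def by auto
  have wp: "w = of_real s * cis \<phi>"
    unfolding s_def \<phi>_def using w0 by (simp add: cis_Arg sgn_div_norm scaleR_conv_of_real)
  have zw: "z = rho f w" unfolding w_def by (rule rho_sig[OF pos, symmetric])
  have dQ: "dist (QQ f \<epsilon> j l) z \<le> L * cmod (p - w)"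
    unfolding Qp zw using hr by (simp add: dist_norm)
  have rs: "s \<le> r" unfolding r_def T_def using l2 by simp
  have ch: "(cmod (p - w))^2 \<le> (r - s)^2 + (r * (\<theta> - \<phi>))^2"
    unfolding p_def wp using chord_bound[of s r \<theta> \<phi>] rs s1 by simp
  have rs2: "r - s \<le> \<epsilon> * T"
  proof -
    have "tt \<epsilon> (Suc l) = T / (1 + \<epsilon>)" unfolding T_def by (rule tt_Suc[OF e])
    then have "r - s < T - T / (1 + \<epsilon>)" using l1 unfolding r_def by simp
    also have "T - T / (1 + \<epsilon>) = \<epsilon> * T / (1 + \<epsilon>)" using e by (simp add: field_simps)
    also have "\<dots> \<le> \<epsilon> * T" using e T0 by (simp add: divide_le_eq)
    finally show ?thesis by simp
  qed
  have rs0: "0 \<le> r - s" using rs by simp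
  have ra: "r * (\<theta> - \<phi>) \<le> \<epsilon> * T"
  proof -
    have r0: "0 < r" unfolding r_def using T0 by simp
    have n0: "0 < real n" using n1 by simp
    have "\<theta> - \<phi> \<le> 2*pi / real n" using a2 unfolding th by linarith
    then have "r * (\<theta> - \<phi>) \<le> r * (2*pi / real n)" using r0 by (intro mult_left_mono) auto
    also have "\<dots> \<le> \<epsilon> * T"
    proof -
      have "2*pi / \<epsilon> * (1 + 1 / T) = 2 * pi * r / (\<epsilon> * T)" unfolding r_def using T0 e by (simp add: field_simps)
      then have "2 * pi * r / (\<epsilon> * T) \<le> real n" using nb by simp
      then have "2 * pi * r \<le> real n * (\<epsilon> * T)" using T0 e by (simp add: divide_le_eq)
      then show ?thesis using n0 by (simp add: divide_le_eq field_simps)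
    qed
    finally show ?thesis .
  qed
  have ra0: "0 \<le> r * (\<theta> - \<phi>)" using a1 T0 unfolding th r_def by simp
  have X0: "0 < \<epsilon> * T" using e T0 by simp
  have c1: "(r - s)^2 \<le> (\<epsilon> * T)^2" by (rule power_mono[OF rs2 rs0])
  have c2: "(r * (\<theta> - \<phi>))^2 \<le> (\<epsilon> * T)^2" by (rule power_mono[OF ra ra0])
  have c3: "(cmod (p - w))^2 \<le> 2 * (\<epsilon> * T)^2" using ch c1 c2 by linarith
  have c4: "(3/2 * (\<epsilon> * T))^2 = 9/4 * (\<epsilon> * T)^2" by (simp add: power2_eq_square algebra_simps)
  have c5: "0 < (\<epsilon> * T)^2" using X0 by (intro zero_less_power) 
  have "(cmod (p - w))^2 < (3/2 * (\<epsilon> * T))^2" using c3 c4 c5 by linarith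
  then have cm: "cmod (p - w) < 3/2 * (\<epsilon> * T)"
    by (rule power2_less_imp_less) (use X0 in simp)
  have "L * cmod (p - w) < L * (3/2 * (\<epsilon> * T))" by (rule mult_strict_left_mono[OF cm L])
  then have "dist (QQ f \<epsilon> j l) z < L * (3/2 * (\<epsilon> * T))" using dQ by linarith
  also have "L * (3/2 * (\<epsilon> * T)) = (3/2 * L^2 * \<epsilon>) * (T / L)"
    using L by (simp add: power2_eq_square)
  also have "\<dots> \<le> (3/2 * L^2 * \<epsilon>) * infdist (QQ f \<epsilon> j l) (curve f)"
    using QQ_dist_lb[OF per pos e hs L, of l j] e L unfolding T_def by (intro mult_left_mono) auto
  finally show ?thesis using j1 j2 unfolding n_def by blast
qed


lemma cis_diff_norm: "cmod (cis a - cis b) = cmod (cis (a - b) - 1)"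
proof -
  have h: "cis b * cis (a - b) = cis a" by (simp add: cis_mult)
  have "cis a - cis b = cis b * (cis (a - b) - 1)" using h by (simp add: algebra_simps)
  then show ?thesis by (simp add: norm_mult)
qed

lemma angle_sep:
  assumes n: "1 \<le> n" and j: "j \<le> n" and k: "k \<le> n"
  shows "pi / (2 * real n) * min \<bar>real j - real k\<bar> (real n - \<bar>real j - real k\<bar>)
         \<le> cmod (cis (-pi + 2*pi/real n * real j) - cis (-pi + 2*pi/real n * real k))"
proof -
  define D where "D = real j - real k"
  have n0: "0 < real n" using n by simp
  have Dn: "\<bar>D\<bar> \<le> real n" unfolding D_def using j k by linarith
  have e1: "cmod (cis (-pi + 2*pi/real n * real j) - cis (-pi + 2*pi/real n * real k))
          = cmod (cis (2*pi/real n * D) - 1)"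
  proof -
    have "(-pi + 2*pi/real n * real j) - (-pi + 2*pi/real n * real k) = 2*pi/real n * D"
      unfolding D_def by (simp add: algebra_simps diff_divide_distrib)
    then show ?thesis unfolding cis_diff_norm by simp
  qed
  have gen: "pi / (2 * real n) * \<bar>E\<bar> \<le> cmod (cis (2*pi/real n * E) - 1)" if "2 * \<bar>E\<bar> \<le> real n" for E
  proof -
    have "\<bar>2*pi/real n * E\<bar> = 2*pi/real n * \<bar>E\<bar>" using n0 by (simp add: abs_mult)
    also have "\<dots> \<le> 2*pi/real n * (real n / 2)" using that n0 by (intro mult_left_mono) auto
    also have "\<dots> = pi" using n0 by simp
    finally have "\<bar>2*pi/real n * E\<bar> \<le> pi" .
    then have "\<bar>2*pi/real n * E\<bar> / 4 \<le> cmod (cis (2*pi/real n * E) - 1)" by (rule norm_cis_minus_1_lb)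
    moreover have "\<bar>2*pi/real n * E\<bar> / 4 = pi / (2 * real n) * \<bar>E\<bar>" using n0 by (simp add: abs_mult)
    ultimately show ?thesis by simp
  qed
  have mn: "0 \<le> pi / (2 * real n)" using n0 by simp
  show ?thesis
  proof (cases "2 * \<bar>D\<bar> \<le> real n")
    case True
    have "pi / (2 * real n) * min \<bar>D\<bar> (real n - \<bar>D\<bar>) \<le> pi / (2 * real n) * \<bar>D\<bar>"
      using mn by (intro mult_left_mono) auto
    also have "\<dots> \<le> cmod (cis (2*pi/real n * D) - 1)" by (rule gen[OF True])
    finally show ?thesis unfolding e1 D_def .
  next
    case False
    define D' where "D' = (if 0 < D then D - real n else D + real n)"
    have aD': "\<bar>D'\<bar> = real n - \<bar>D\<bar>" unfolding D'_def using Dn False by auto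
    have "2 * \<bar>D'\<bar> \<le> real n" using aD' False by linarith
    then have g: "pi / (2 * real n) * \<bar>D'\<bar> \<le> cmod (cis (2*pi/real n * D') - 1)" by (rule gen)
    have "cis (2*pi/real n * D') = cis (2*pi/real n * D)"
    proof (cases "0 < D")
      case True
      have "2*pi/real n * D = 2*pi/real n * D' + 2*pi" unfolding D'_def using True n0 by (simp add: field_simps)
      then show ?thesis by (simp add: cis_mult[symmetric])
    next
      case False
      have "2*pi/real n * D' = 2*pi/real n * D + 2*pi" unfolding D'_def using False n0 by (simp add: field_simps)
      then show ?thesis by (simp add: cis_mult[symmetric])
    qed
    then have "pi / (2 * real n) * (real n - \<bar>D\<bar>) \<le> cmod (cis (2*pi/real n * D) - 1)"
      using g aD' by simp
    moreover have "pi / (2 * real n) * min \<bar>D\<bar> (real n - \<bar>D\<bar>) \<le> pi / (2 * real n) * (real n - \<bar>D\<bar>)"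
      using mn by (intro mult_left_mono) auto
    ultimately show ?thesis unfolding e1 D_def by linarith
  qed
qed

lemma count_circ:
  fixes J :: "nat set"
  assumes sub: "J \<subseteq> {1..n}"
    and close: "\<forall>j\<in>J. \<forall>k\<in>J. min \<bar>real j - real k\<bar> (real n - \<bar>real j - real k\<bar>) < c"
  shows "card J \<le> 4 * nat \<lceil>c\<rceil> + 3"
proof (cases "J = {}")
  case True then show ?thesis by simp
next
  case False
  then obtain j0 where j0: "j0 \<in> J" by blast
  define C where "C = nat \<lceil>c\<rceil>"
  have Cc: "c \<le> real C" unfolding C_def by linarith
  have j0n: "1 \<le> j0" "j0 \<le> n" using j0 sub by auto
  have "J \<subseteq> {j0 - C..j0 + C} \<union> {n - C..n} \<union> {0..C}"
  proof
    fix k assume kJ: "k \<in> J"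
    have kn: "1 \<le> k" "k \<le> n" using kJ sub by auto
    have m: "min \<bar>real k - real j0\<bar> (real n - \<bar>real k - real j0\<bar>) < c" using close kJ j0 by blast
    show "k \<in> {j0 - C..j0 + C} \<union> {n - C..n} \<union> {0..C}"
    proof (cases "\<bar>real k - real j0\<bar> < c")
      case True
      then have "real k < real j0 + real C" "real j0 < real k + real C" using Cc by linarith+
      then have "k < j0 + C" "j0 < k + C" by linarith+
      then show ?thesis by auto
    next
      case False
      then have m2: "real n - \<bar>real k - real j0\<bar> < c" using m by linarith
      show ?thesis
      proof (cases "j0 \<le> k")
        case True
        then have "real n - (real k - real j0) < real C" using m2 Cc by linarith
        then have "real n < real k + real C" using j0n by linarith
        then have "n < k + C" by linarith
        then show ?thesis using kn by auto
      next
        case False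
        then have "real n - (real j0 - real k) < real C" using m2 Cc by linarith
        then have "real k < real C" using j0n by linarith
        then have "k < C" by linarith
        then show ?thesis by auto
      qed
    qed
  qed
  then have "card J \<le> card ({j0 - C..j0 + C} \<union> {n - C..n} \<union> {0..C})"
    by (intro card_mono) auto
  also have "\<dots> \<le> card ({j0 - C..j0 + C} \<union> {n - C..n}) + card {0..C::nat}" by (rule card_Un_le)
  also have "\<dots> \<le> card {j0 - C..j0 + C} + card {n - C..n} + card {0..C::nat}"
    using card_Un_le[of "{j0 - C..j0 + C}" "{n - C..n}"] by linarith
  also have "\<dots> \<le> (2*C + 1) + (C + 1) + (C + 1)" by simp
  finally show ?thesis unfolding C_def by simp
qed


lemma near_dist:
  assumes h: "dist q y < e' * infdist q A" and e0: "0 \<le> e'" and e1: "e' \<le> 1/4"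
  shows "3/4 * infdist q A \<le> infdist y A" and "infdist y A \<le> 5/4 * infdist q A"
proof -
  have a: "\<bar>infdist q A - infdist y A\<bar> \<le> dist q y" by (rule infdist_triangle_abs)
  have d0: "0 \<le> infdist q A" by (rule infdist_nonneg)
  have "e' * infdist q A \<le> 1/4 * infdist q A" using e1 d0 by (rule mult_right_mono)
  then show "3/4 * infdist q A \<le> infdist y A" and "infdist y A \<le> 5/4 * infdist q A"
    using a h by linarith+
qed

lemma tt_shift:
  assumes e: "0 < \<epsilon>"
  shows "tt \<epsilon> l = tt \<epsilon> (l + m) * (1+\<epsilon>)^m"
proof -
  have p: "0 < (1+\<epsilon>)^l" "0 < (1+\<epsilon>)^m" using e by simp_all
  show ?thesis unfolding tt_def power_add using p e by (simp add: field_simps)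
qed

lemma levels_close:
  assumes per: "\<forall>\<theta>. f (\<theta> + 2*pi) = f \<theta>" and pos: "\<forall>\<theta>. f \<theta> > 0"
    and hr: "\<forall>a b. dist (rho f a) (rho f b) \<le> L * dist a b"
    and hs: "\<forall>a b. dist (sig f a) (sig f b) \<le> L * dist a b" and L: "0 < L" and e: "0 < \<epsilon>"
    and e0: "0 \<le> e'" and e1: "e' \<le> 1/4"
    and h1: "dist (QQ f \<epsilon> j1 l1) y < e' * infdist (QQ f \<epsilon> j1 l1) (curve f)"
    and h2: "dist (QQ f \<epsilon> j2 l2) y < e' * infdist (QQ f \<epsilon> j2 l2) (curve f)"
    and l12: "l1 \<le> l2"
  shows "l2 - l1 \<le> nat \<lceil>5/3 * L^2 / \<epsilon>\<rceil>"
proof -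
  define m where "m = l2 - l1"
  have l2e: "l2 = l1 + m" unfolding m_def using l12 by simp
  define d1 where "d1 = infdist (QQ f \<epsilon> j1 l1) (curve f)"
  define d2 where "d2 = infdist (QQ f \<epsilon> j2 l2) (curve f)"
  define dy where "dy = infdist y (curve f)"
  have A1: "tt \<epsilon> l1 / L \<le> d1" unfolding d1_def by (rule QQ_dist_lb[OF per pos e hs L])
  have A2: "d2 \<le> L * tt \<epsilon> l2" unfolding d2_def by (rule QQ_dist_ub[OF per pos e hr])
  have B1: "d1 \<le> 4/3 * dy" using near_dist(1)[OF h1 e0 e1] unfolding d1_def dy_def by linarith
  have B2: "dy \<le> 5/4 * d2" using near_dist(2)[OF h2 e0 e1] unfolding d2_def dy_def .
  have T1: "tt \<epsilon> l1 \<le> L * d1" using A1 L by (simp add: divide_le_eq mult.commute)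
  have "L * d1 \<le> L * (4/3 * dy)" using B1 L by simp
  also have "\<dots> \<le> L * (4/3 * (5/4 * d2))" using B2 L by simp
  also have "\<dots> \<le> L * (4/3 * (5/4 * (L * tt \<epsilon> l2)))" using A2 L by simp
  finally have "tt \<epsilon> l1 \<le> 5/3 * L^2 * tt \<epsilon> l2" using T1 by (simp add: power2_eq_square algebra_simps)
  then have "tt \<epsilon> l2 * (1+\<epsilon>)^m \<le> tt \<epsilon> l2 * (5/3 * L^2)"
    using tt_shift[OF e, of l1 m] unfolding l2e by (simp add: algebra_simps)
  then have "(1+\<epsilon>)^m \<le> 5/3 * L^2" using tt_pos[OF e, of l2] by (simp add: mult_le_cancel_left_pos)
  moreover have "1 + real m * \<epsilon> \<le> (1+\<epsilon>)^m" using e by (intro Bernoulli_inequality) simp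
  ultimately have "real m * \<epsilon> \<le> 5/3 * L^2" by linarith
  then have "real m \<le> 5/3 * L^2 / \<epsilon>" using e by (simp add: le_divide_eq)
  then have "real m \<le> real (nat \<lceil>5/3 * L^2 / \<epsilon>\<rceil>)" by linarith
  then show ?thesis unfolding m_def by linarith
qed

lemma Tn_bound:
  assumes e: "0 < \<epsilon>"
  shows "tt \<epsilon> l * real (NN \<epsilon> l) \<le> 4*pi/\<epsilon> + 1"
proof -
  define T where "T = tt \<epsilon> l"
  have T0: "0 < T" "T \<le> 1" unfolding T_def using tt_pos[OF e] tt_le1[OF e] by auto
  define x where "x = 2*pi / \<epsilon> * (1 + (1+\<epsilon>)^l)"
  have x0: "0 < x" unfolding x_def using e by (simp add: add_pos_pos)
  have "real (NN \<epsilon> l) \<le> x + 1" unfolding NN_def x_def[symmetric] using x0 by linarith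
  then have "T * real (NN \<epsilon> l) \<le> T * (x + 1)" using T0 by (intro mult_left_mono) auto
  also have "x = 2*pi / \<epsilon> * (1 + 1/T)" unfolding x_def T_def using tt_inv[OF e, of l] by simp
  also have "T * (2*pi / \<epsilon> * (1 + 1/T) + 1) = 2*pi/\<epsilon> * (T + 1) + T" using T0 e by (simp add: field_simps)
  also have "\<dots> \<le> 2*pi/\<epsilon> * 2 + 1" using T0 e by (intro add_mono mult_left_mono) auto
  finally show ?thesis unfolding T_def by simp
qed

lemma near_dir:
  assumes per: "\<forall>\<theta>. f (\<theta> + 2*pi) = f \<theta>" and pos: "\<forall>\<theta>. f \<theta> > 0"
    and hr: "\<forall>a b. dist (rho f a) (rho f b) \<le> L * dist a b"
    and hs: "\<forall>a b. dist (sig f a) (sig f b) \<le> L * dist a b" and L: "0 < L" and e: "0 < \<epsilon>"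
    and e0: "0 \<le> e'"
    and h: "dist (QQ f \<epsilon> j l) y < e' * infdist (QQ f \<epsilon> j l) (curve f)"
  shows "cmod (sgn (sig f y) - cis (TH \<epsilon> j l)) < 2 * L^2 * e' * tt \<epsilon> l"
proof -
  define p where "p = of_real (1 + tt \<epsilon> l) * cis (TH \<epsilon> j l)"
  have T0: "0 < tt \<epsilon> l" by (rule tt_pos[OF e])
  have sp: "sig f (QQ f \<epsilon> j l) = p" unfolding p_def by (rule QQ_sig[OF per pos e])
  have np: "cmod p = 1 + tt \<epsilon> l"
  proof -
    have "cmod p = \<bar>1 + tt \<epsilon> l\<bar> * cmod (cis (TH \<epsilon> j l))" unfolding p_def by (simp only: norm_mult norm_of_real)
    then show ?thesis using T0 by simp
  qed
  have p0: "p \<noteq> 0" using np T0 by auto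
  have sgp: "sgn p = cis (TH \<epsilon> j l)"
  proof -
    have "sgn p = sgn (of_real (1 + tt \<epsilon> l)) * sgn (cis (TH \<epsilon> j l))" unfolding p_def by (rule sgn_mult)
    moreover have "sgn (complex_of_real (1 + tt \<epsilon> l)) = complex_of_real (sgn (1 + tt \<epsilon> l))" by (rule sgn_of_real)
    moreover have "sgn (1 + tt \<epsilon> l) = 1" using T0 by simp
    ultimately show ?thesis by (simp only: sgn_cis_eq of_real_1 mult_1_left)
  qed
  have "dist p (sig f y) \<le> L * dist (QQ f \<epsilon> j l) y" unfolding sp[symmetric] using hs by blast
  also have "\<dots> < L * (e' * infdist (QQ f \<epsilon> j l) (curve f))" using h L by (rule mult_strict_left_mono)
  also have "\<dots> \<le> L * (e' * (L * tt \<epsilon> l))"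
    using QQ_dist_ub[OF per pos e hr, of j l] L e0 by (intro mult_left_mono) auto
  finally have dp: "cmod (sig f y - p) < L^2 * e' * tt \<epsilon> l"
    by (simp add: dist_norm norm_minus_commute power2_eq_square algebra_simps)
  have "cmod p * cmod (sgn (sig f y) - sgn p) \<le> 2 * cmod (sig f y - p)" by (rule sgn_diff[OF p0])
  moreover have "1 * cmod (sgn (sig f y) - sgn p) \<le> cmod p * cmod (sgn (sig f y) - sgn p)"
    by (rule mult_right_mono) (use np T0 in auto)
  ultimately have "cmod (sgn (sig f y) - sgn p) < 2 * (L^2 * e' * tt \<epsilon> l)" using dp by linarith
  then show ?thesis unfolding sgp by (simp add: algebra_simps)
qed


lemma angles_count:
  assumes per: "\<forall>\<theta>. f (\<theta> + 2*pi) = f \<theta>" and pos: "\<forall>\<theta>. f \<theta> > 0"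
    and hr: "\<forall>a b. dist (rho f a) (rho f b) \<le> L * dist a b"
    and hs: "\<forall>a b. dist (sig f a) (sig f b) \<le> L * dist a b" and L: "0 < L" and e: "0 < \<epsilon>"
    and e0: "0 \<le> e'"
  shows "card {j. 1 \<le> j \<and> j \<le> NN \<epsilon> l \<and> dist (QQ f \<epsilon> j l) y < e' * infdist (QQ f \<epsilon> j l) (curve f)}
         \<le> 4 * nat \<lceil>8 * L^2 * e' * (4*pi/\<epsilon> + 1) / pi\<rceil> + 3"
proof (rule count_circ)
  define n where "n = NN \<epsilon> l"
  define T where "T = tt \<epsilon> l"
  let ?J = "{j. 1 \<le> j \<and> j \<le> NN \<epsilon> l \<and> dist (QQ f \<epsilon> j l) y < e' * infdist (QQ f \<epsilon> j l) (curve f)}"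
  show "?J \<subseteq> {1..NN \<epsilon> l}" by auto
  have n1: "1 \<le> n" unfolding n_def by (rule NN_bound(2)[OF e])
  have n0: "0 < real n" using n1 by simp
  have Tn: "T * real n \<le> 4*pi/\<epsilon> + 1" unfolding T_def n_def by (rule Tn_bound[OF e])
  show "\<forall>j\<in>?J. \<forall>k\<in>?J. min \<bar>real j - real k\<bar> (real (NN \<epsilon> l) - \<bar>real j - real k\<bar>)
          < 8 * L^2 * e' * (4*pi/\<epsilon> + 1) / pi"
  proof (intro ballI)
    fix j k assume jJ: "j \<in> ?J" and kJ: "k \<in> ?J"
    define M where "M = min \<bar>real j - real k\<bar> (real n - \<bar>real j - real k\<bar>)"
    define w where "w = sgn (sig f y)"
    have dj: "cmod (w - cis (TH \<epsilon> j l)) < 2 * L^2 * e' * T"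
      unfolding w_def T_def using near_dir[OF per pos hr hs L e e0] jJ by blast
    have dk: "cmod (w - cis (TH \<epsilon> k l)) < 2 * L^2 * e' * T"
      unfolding w_def T_def using near_dir[OF per pos hr hs L e e0] kJ by blast
    have "cis (TH \<epsilon> j l) - cis (TH \<epsilon> k l) = (w - cis (TH \<epsilon> k l)) - (w - cis (TH \<epsilon> j l))" by simp
    then have "cmod (cis (TH \<epsilon> j l) - cis (TH \<epsilon> k l)) \<le> cmod (w - cis (TH \<epsilon> k l)) + cmod (w - cis (TH \<epsilon> j l))"
      by (metis norm_triangle_ineq4)
    also have "\<dots> < 4 * L^2 * e' * T" using dj dk by linarith
    finally have c1: "cmod (cis (TH \<epsilon> j l) - cis (TH \<epsilon> k l)) < 4 * L^2 * e' * T" .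
    have jn: "j \<le> n" and kn: "k \<le> n" using jJ kJ unfolding n_def by auto
    have "pi / (2 * real n) * M \<le> cmod (cis (TH \<epsilon> j l) - cis (TH \<epsilon> k l))"
      unfolding M_def TH_def n_def[symmetric] by (rule angle_sep[OF n1 jn kn])
    then have c2: "pi / (2 * real n) * M < 4 * L^2 * e' * T" using c1 by linarith
    have "pi * M = (pi / (2 * real n) * M) * (2 * real n)" using n0 by simp
    also have "\<dots> < (4 * L^2 * e' * T) * (2 * real n)" using c2 n0 by (intro mult_strict_right_mono) auto
    also have "\<dots> = 8 * L^2 * e' * (T * real n)" by (simp add: algebra_simps)
    also have "\<dots> \<le> 8 * L^2 * e' * (4*pi/\<epsilon> + 1)" using Tn e0 by (intro mult_left_mono) auto
    finally have "pi * M < 8 * L^2 * e' * (4*pi/\<epsilon> + 1)" .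
    then have "M < 8 * L^2 * e' * (4*pi/\<epsilon> + 1) / pi" using pi_gt_zero by (simp add: less_divide_eq mult.commute)
    then show "min \<bar>real j - real k\<bar> (real (NN \<epsilon> l) - \<bar>real j - real k\<bar>)
          < 8 * L^2 * e' * (4*pi/\<epsilon> + 1) / pi" unfolding M_def n_def .
  qed
qed


lemma overlap:
  assumes per: "\<forall>\<theta>. f (\<theta> + 2*pi) = f \<theta>" and pos: "\<forall>\<theta>. f \<theta> > 0"
    and hr: "\<forall>a b. dist (rho f a) (rho f b) \<le> L * dist a b"
    and hs: "\<forall>a b. dist (sig f a) (sig f b) \<le> L * dist a b" and L: "0 < L" and e: "0 < \<epsilon>"
    and e0: "0 \<le> e'" and e1: "e' \<le> 1/4"
  shows "\<exists>M::nat. \<forall>y. finite {x \<in> (\<Union>l. {QQ f \<epsilon> j l | j. 1 \<le> j \<and> j \<le> NN \<epsilon> l}). y \<in> ball x (e' * infdist x (curve f))}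
      \<and> card {x \<in> (\<Union>l. {QQ f \<epsilon> j l | j. 1 \<le> j \<and> j \<le> NN \<epsilon> l}). y \<in> ball x (e' * infdist x (curve f))} \<le> M"
proof -
  define K where "K = nat \<lceil>5/3 * L^2 / \<epsilon>\<rceil>"
  define B where "B = 4 * nat \<lceil>8 * L^2 * e' * (4*pi/\<epsilon> + 1) / pi\<rceil> + 3"
  show ?thesis
  proof (rule exI[of _ "(K + 1) * B"], intro allI conjI)
    fix y
    define P where "P = (\<lambda>j l. 1 \<le> j \<and> j \<le> NN \<epsilon> l \<and> dist (QQ f \<epsilon> j l) y < e' * infdist (QQ f \<epsilon> j l) (curve f))"
    define Ay where "Ay = {l. \<exists>j. P j l}"
    define J where "J = (\<lambda>l. {j. P j l})"
    define l0 where "l0 = (if Ay = {} then 0 else (LEAST l. l \<in> Ay))"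
    let ?S = "{x \<in> (\<Union>l. {QQ f \<epsilon> j l | j. 1 \<le> j \<and> j \<le> NN \<epsilon> l}). y \<in> ball x (e' * infdist x (curve f))}"
    have sub: "?S \<subseteq> (\<Union>l\<in>{l0..l0+K}. (\<lambda>j. QQ f \<epsilon> j l) ` J l)"
    proof
      fix x assume "x \<in> ?S"
      then obtain l j where xq: "x = QQ f \<epsilon> j l" and j1: "1 \<le> j" "j \<le> NN \<epsilon> l"
        and xb: "y \<in> ball x (e' * infdist x (curve f))" by blast
      have Pjl: "P j l" unfolding P_def using j1 xb xq by (simp add: mem_ball)
      then have lA: "l \<in> Ay" unfolding Ay_def by blast
      then have ne: "Ay \<noteq> {}" by blast
      have l0e: "l0 = (LEAST l. l \<in> Ay)" unfolding l0_def using ne by simp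
      have l0A: "l0 \<in> Ay" unfolding l0e using lA by (rule LeastI)
      have l0l: "l0 \<le> l" unfolding l0e using lA by (rule Least_le)
      obtain j0 where Pj0: "P j0 l0" using l0A unfolding Ay_def by blast
      have "l - l0 \<le> K" unfolding K_def
        using levels_close[OF per pos hr hs L e e0 e1, of j0 l0 y j l] Pj0 Pjl l0l unfolding P_def by blast
      then have "l \<in> {l0..l0+K}" using l0l by simp
      moreover have "j \<in> J l" unfolding J_def using Pjl by simp
      ultimately show "x \<in> (\<Union>l\<in>{l0..l0+K}. (\<lambda>j. QQ f \<epsilon> j l) ` J l)" using xq by blast
    qed
    have finJ: "finite (J l)" for l
    proof -
      have "J l \<subseteq> {..NN \<epsilon> l}" unfolding J_def P_def by auto
      then show ?thesis using finite_subset by blast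
    qed
    have cJ: "card (J l) \<le> B" for l
      unfolding J_def P_def B_def by (rule angles_count[OF per pos hr hs L e e0])
    have finU: "finite (\<Union>l\<in>{l0..l0+K}. (\<lambda>j. QQ f \<epsilon> j l) ` J l)" using finJ by blast
    show "finite ?S" using finite_subset[OF sub finU] .
    have "card ?S \<le> card (\<Union>l\<in>{l0..l0+K}. (\<lambda>j. QQ f \<epsilon> j l) ` J l)" by (rule card_mono[OF finU sub])
    also have "\<dots> \<le> (\<Sum>l\<in>{l0..l0+K}. card ((\<lambda>j. QQ f \<epsilon> j l) ` J l))" by (rule card_UN_le) simp
    also have "\<dots> \<le> (\<Sum>l\<in>{l0..l0+K}. B)"
    proof (rule sum_mono)
      fix l show "card ((\<lambda>j. QQ f \<epsilon> j l) ` J l) \<le> B" using card_image_le[OF finJ, of _ l] cJ[of l] le_trans by blast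
    qed
    also have "\<dots> = (K + 1) * B" by simp
    finally show "card ?S \<le> (K + 1) * B" .
  qed
qed

theorem mainTheorem17:
  fixes r\<gamma> :: "real \<Rightarrow> real" and \<epsilon> :: real
  assumes per: "\<forall>\<theta>. r\<gamma> (\<theta> + 2*pi) = r\<gamma> \<theta>"
    and pos: "\<forall>\<theta>. r\<gamma> \<theta> > 0"
    and lip: "\<exists>K. K-lipschitz_on UNIV r\<gamma>"
    and eps_pos: "\<epsilon> > 0"
    and eps_small: "3/2 * (max (Lip (rho r\<gamma>)) (Lip (inv (rho r\<gamma>))))\<^sup>2 * \<epsilon> \<le> 1/4"
  shows "let \<LL> = max (Lip (rho r\<gamma>)) (Lip (inv (rho r\<gamma>)));
             \<epsilon>' = 3/2 * \<LL>\<^sup>2 * \<epsilon>;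
             n = (\<lambda>l::nat. nat \<lceil>2*pi / \<epsilon> * (1 + (1+\<epsilon>)^l)\<rceil>);
             rl = (\<lambda>l::nat. 1 + inverse ((1+\<epsilon>)^l));
             \<theta> = (\<lambda>j::nat. \<lambda>l::nat. - pi + 2*pi / real (n l) * real j);
             q = (\<lambda>j l. complex_of_real (rl l * r\<gamma> (\<theta> j l)) * cis (\<theta> j l))
         in whitney_set \<epsilon>' (Omega_minus_delta r\<gamma> (1/\<LL>)) (curve r\<gamma>)
              (\<Union>l. {q j l | j. 1 \<le> j \<and> j \<le> n l})"
proof -
  obtain K where lipK: "K-lipschitz_on UNIV r\<gamma>" using lip by blast
  define LL where "LL = max (Lip (rho r\<gamma>)) (Lip (inv (rho r\<gamma>)))"
  have invr: "inv (rho r\<gamma>) = sig r\<gamma>" by (rule inv_rho[OF pos])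
  obtain Cr where Cr: "Cr-lipschitz_on UNIV (rho r\<gamma>)" using rho_lip[OF per pos lipK] by blast
  obtain Cs where Cs: "Cs-lipschitz_on UNIV (sig r\<gamma>)" using sig_lip[OF per pos lipK] by blast
  have Lr: "(Lip (rho r\<gamma>))-lipschitz_on UNIV (rho r\<gamma>)" by (rule Lip_works[OF Cr])
  have Ls: "(Lip (sig r\<gamma>))-lipschitz_on UNIV (sig r\<gamma>)" by (rule Lip_works[OF Cs])
  have LLr: "Lip (rho r\<gamma>) \<le> LL" and LLs: "Lip (sig r\<gamma>) \<le> LL" unfolding LL_def invr by auto
  have hr: "\<forall>a b. dist (rho r\<gamma> a) (rho r\<gamma> b) \<le> LL * dist a b"
  proof (intro allI)
    fix a b
    have "dist (rho r\<gamma> a) (rho r\<gamma> b) \<le> Lip (rho r\<gamma>) * dist a b" using lipschitz_onD[OF Lr] by blast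
    also have "\<dots> \<le> LL * dist a b" using LLr by (rule mult_right_mono) simp
    finally show "dist (rho r\<gamma> a) (rho r\<gamma> b) \<le> LL * dist a b" .
  qed
  have hs: "\<forall>a b. dist (sig r\<gamma> a) (sig r\<gamma> b) \<le> LL * dist a b"
  proof (intro allI)
    fix a b
    have "dist (sig r\<gamma> a) (sig r\<gamma> b) \<le> Lip (sig r\<gamma>) * dist a b" using lipschitz_onD[OF Ls] by blast
    also have "\<dots> \<le> LL * dist a b" using LLs by (rule mult_right_mono) simp
    finally show "dist (sig r\<gamma> a) (sig r\<gamma> b) \<le> LL * dist a b" .
  qed
  have LL0: "0 \<le> LL" using lipschitz_on_nonneg[OF Lr] LLr by linarith
  have "1 = dist (sig r\<gamma> (rho r\<gamma> 1)) (sig r\<gamma> (rho r\<gamma> 0))" unfolding sig_rho[OF pos] by simp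
  also have "\<dots> \<le> LL * dist (rho r\<gamma> 1) (rho r\<gamma> 0)" using hs by blast
  also have "\<dots> \<le> LL * (LL * dist (1::complex) 0)"
  proof -
    have "dist (rho r\<gamma> 1) (rho r\<gamma> 0) \<le> LL * dist (1::complex) 0" using hr by blast
    then show ?thesis using LL0 by (rule mult_left_mono)
  qed
  finally have LLsq: "1 \<le> LL * LL" by simp
  have LL1: "1 \<le> LL"
  proof (rule ccontr)
    assume "\<not> 1 \<le> LL"
    then have "LL * LL \<le> LL * 1" using LL0 by (intro mult_left_mono) auto
    then show False using LLsq \<open>\<not> 1 \<le> LL\<close> by linarith
  qed
  have L: "0 < LL" using LL1 by simp
  define e' where "e' = 3/2 * LL^2 * \<epsilon>"
  have e0: "0 \<le> e'" unfolding e'_def using eps_pos by simp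
  have e1: "e' \<le> 1/4" unfolding e'_def LL_def using eps_small .
  have cu: "curve r\<gamma> = {z. cmod (sig r\<gamma> z) = 1}" by (rule curve_eq[OF per pos])
  have cs: "continuous_on UNIV (sig r\<gamma>)" using Cs lipschitz_on_continuous_on by blast
  have cn: "continuous_on UNIV (\<lambda>z. cmod (sig r\<gamma> z))" by (rule continuous_on_norm[OF cs])
  have OM: "Omega_minus r\<gamma> \<subseteq> {z. 1 < cmod (sig r\<gamma> z)}" by (rule Omega_minus_sub[OF per pos lipK])
  let ?X = "\<Union>l. {QQ r\<gamma> \<epsilon> j l | j. 1 \<le> j \<and> j \<le> NN \<epsilon> l}"
  have W: "whitney_set e' (Omega_minus_delta r\<gamma> (1/LL)) (curve r\<gamma>) ?X"
    unfolding whitney_set_def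
  proof (intro conjI)
    show "closed (curve r\<gamma>)" unfolding cu by (rule closed_Collect_eq[OF cn continuous_on_const])
    show "Omega_minus_delta r\<gamma> (1/LL) \<subseteq> - curve r\<gamma>"
      using OM unfolding Omega_minus_delta_def cu by auto
    show "e' \<le> 1/2" using e1 by simp
    show "countable ?X"
    proof (rule countable_UN)
      show "countable (UNIV :: nat set)" by simp
      fix l :: nat
      have "finite {j::nat. 1 \<le> j \<and> j \<le> NN \<epsilon> l}" by (rule finite_subset[of _ "{..NN \<epsilon> l}"]) auto
      then show "countable {QQ r\<gamma> \<epsilon> j l | j. 1 \<le> j \<and> j \<le> NN \<epsilon> l}"
        by (intro countable_finite finite_image_set)
    qed
    show "?X \<subseteq> - curve r\<gamma>"
    proof
      fix x assume "x \<in> ?X"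
      then obtain l j where xq: "x = QQ r\<gamma> \<epsilon> j l" by blast
      have "cmod (sig r\<gamma> x) = 1 + tt \<epsilon> l" unfolding xq by (rule QQ_norm_sig[OF per pos eps_pos])
      then show "x \<in> - curve r\<gamma>" unfolding cu using tt_pos[OF eps_pos, of l] by simp
    qed
    show "Omega_minus_delta r\<gamma> (1/LL) \<subseteq> (\<Union>x\<in>?X. ball x (e' * infdist x (curve r\<gamma>)))"
    proof
      fix z assume "z \<in> Omega_minus_delta r\<gamma> (1/LL)"
      then have z1: "1 < cmod (sig r\<gamma> z)" and z2: "infdist z (curve r\<gamma>) < 1 / LL"
        using OM unfolding Omega_minus_delta_def by auto
      obtain l j where j1: "1 \<le> j" "j \<le> NN \<epsilon> l"
        and d: "dist (QQ r\<gamma> \<epsilon> j l) z < (3/2 * LL^2 * \<epsilon>) * infdist (QQ r\<gamma> \<epsilon> j l) (curve r\<gamma>)"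
        using cover[OF per pos hr hs L eps_pos z1 z2] by blast
      have "QQ r\<gamma> \<epsilon> j l \<in> ?X" using j1 by blast
      moreover have "z \<in> ball (QQ r\<gamma> \<epsilon> j l) (e' * infdist (QQ r\<gamma> \<epsilon> j l) (curve r\<gamma>))"
        using d unfolding e'_def by (simp add: mem_ball)
      ultimately show "z \<in> (\<Union>x\<in>?X. ball x (e' * infdist x (curve r\<gamma>)))" by blast
    qed
    show "\<exists>M::nat. \<forall>y. finite {x \<in> ?X. y \<in> ball x (e' * infdist x (curve r\<gamma>))}
      \<and> card {x \<in> ?X. y \<in> ball x (e' * infdist x (curve r\<gamma>))} \<le> M"
      by (rule overlap[OF per pos hr hs L eps_pos e0 e1])
  qed
  show ?thesis
    unfolding Let_def using W unfolding e'_def LL_def QQ_def TH_def NN_def tt_def .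
qed

end
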